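(* For every connected graph $G$ of order $n$, $\chi_{\mu_2}(G)\le \lceil n/2\rceil$. Moreover, this bound is sharp, i.e., there are connected graphs attaining equality.
   Context: A $u,v$-geodesic is a shortest $u,v$-path. A set $M\subseteq V(G)$ is a $2$-distance mutual-visibility set if for every two vertices $u,v\in M$ there exists a $u,v$-geodesic of length at most $2$ none of whose internal vertices lies in $M$. $\chi_{\mu_2}(G)$ is the minimum cardinality of a partition of $V(G)$ into $2$-distance mutual-visibility sets. *)

theory Defs
  imports Complex_Main "HOL-Library.Disjoint_Sets"
begin

definition graph :: "'a set \<Rightarrow> ('a \<Rightarrow> 'a \<Rightarrow> bool) \<Rightarrow> bool" where
  "graph V E \<longleftrightarrow> finite V \<and> (\<forall>u v. E u v \<longrightarrow> u \<in> V \<and> v \<in> V)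
     \<and> (\<forall>u v. E u v \<longrightarrow> E v u) \<and> (\<forall>u. \<not> E u u)"

text \<open>A u,v-path given as its list of vertices (length of the path = length p - 1).\<close>
definition is_path :: "'a set \<Rightarrow> ('a \<Rightarrow> 'a \<Rightarrow> bool) \<Rightarrow> 'a list \<Rightarrow> 'a \<Rightarrow> 'a \<Rightarrow> bool" where
  "is_path V E p u v \<longleftrightarrow> p \<noteq> [] \<and> hd p = u \<and> last p = v \<and> set p \<subseteq> V \<and> distinct p
     \<and> (\<forall>i. Suc i < length p \<longrightarrow> E (p ! i) (p ! Suc i))"

definition connected_graph :: "'a set \<Rightarrow> ('a \<Rightarrow> 'a \<Rightarrow> bool) \<Rightarrow> bool" where
  "connected_graph V E \<longleftrightarrow> (\<forall>u\<in>V. \<forall>v\<in>V. \<exists>p. is_path V E p u v)"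

definition geodesic :: "'a set \<Rightarrow> ('a \<Rightarrow> 'a \<Rightarrow> bool) \<Rightarrow> 'a list \<Rightarrow> 'a \<Rightarrow> 'a \<Rightarrow> bool" where
  "geodesic V E p u v \<longleftrightarrow> is_path V E p u v \<and> (\<forall>q. is_path V E q u v \<longrightarrow> length p \<le> length q)"

definition internal :: "'a list \<Rightarrow> 'a set" where
  "internal p = set (butlast (tl p))"

definition dmv2_set :: "'a set \<Rightarrow> ('a \<Rightarrow> 'a \<Rightarrow> bool) \<Rightarrow> 'a set \<Rightarrow> bool" where
  "dmv2_set V E M \<longleftrightarrow> M \<subseteq> V \<and>
     (\<forall>u\<in>M. \<forall>v\<in>M. u \<noteq> v \<longrightarrow>
        (\<exists>p. geodesic V E p u v \<and> length p - 1 \<le> 2 \<and> internal p \<inter> M = {}))"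

definition chi_mu2 :: "'a set \<Rightarrow> ('a \<Rightarrow> 'a \<Rightarrow> bool) \<Rightarrow> nat" where
  "chi_mu2 V E = (LEAST k. \<exists>P. partition_on V P \<and> (\<forall>M\<in>P. dmv2_set V E M) \<and> card P = k)"

end

theory Submission
  imports Defs
begin

definition good_block :: "('a \<Rightarrow> 'a \<Rightarrow> bool) \<Rightarrow> 'a set \<Rightarrow> bool" where
  "good_block E M \<longleftrightarrow> (\<exists>a. M = {a}) \<or>
     (\<exists>a b. M = {a,b} \<and> a \<noteq> b \<and> (E a b \<or> (\<exists>w. E a w \<and> E w b)))"

lemma path_len_ge2:
  assumes "is_path V E q u v" "u \<noteq> v"
  shows "length q \<ge> 2"
proof (rule ccontr)
  assume "\<not> length q \<ge> 2"
  moreover have "q \<noteq> []" using assms unfolding is_path_def by auto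
  ultimately obtain x where "q = [x]" by (cases q) (auto simp: Suc_le_eq)
  then show False using assms unfolding is_path_def by auto
qed

lemma path_len_ge3:
  assumes "is_path V E q u v" "u \<noteq> v" "\<not> E u v"
  shows "length q \<ge> 3"
proof (rule ccontr)
  assume "\<not> length q \<ge> 3"
  moreover have "length q \<ge> 2" using path_len_ge2[OF assms(1,2)] .
  ultimately obtain x y where "q = [x,y]"
    by (cases q; cases "tl q") (auto simp: Suc_le_eq)
  then show False using assms unfolding is_path_def by (auto dest: spec[of _ 0])
qed

lemma good_dmv2:
  assumes g: "graph V E" and M: "M \<subseteq> V" and gb: "good_block E M"
  shows "dmv2_set V E M"
proof -
  have sym: "\<And>x y. E x y \<Longrightarrow> E y x" and irr: "\<And>x. \<not> E x x"
    and inV: "\<And>x y. E x y \<Longrightarrow> x \<in> V \<and> y \<in> V"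
    using g unfolding graph_def by blast+
  have edge: "\<exists>p. geodesic V E p u v \<and> length p - 1 \<le> 2 \<and> internal p \<inter> M = {}"
    if "E u v" for u v
  proof -
    have uv: "u \<noteq> v" using irr that by metis
    have "is_path V E [u,v] u v" using that inV uv unfolding is_path_def
      by (auto simp: less_Suc_eq)
    moreover have "\<forall>q. is_path V E q u v \<longrightarrow> length [u,v] \<le> length q"
      using path_len_ge2 uv by fastforce
    ultimately show ?thesis unfolding geodesic_def internal_def by (intro exI[of _ "[u,v]"]) auto
  qed
  have two: "\<exists>p. geodesic V E p u v \<and> length p - 1 \<le> 2 \<and> internal p \<inter> M = {}"
    if "E u w" "E w v" "\<not> E u v" "u \<noteq> v" "w \<notin> M" for u v w
  proof -
    have "u \<noteq> w" "w \<noteq> v" using irr that by metis+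
    then have "is_path V E [u,w,v] u v" using that inV unfolding is_path_def
      by (auto simp: less_Suc_eq nth_Cons split: nat.splits)
    moreover have "\<forall>q. is_path V E q u v \<longrightarrow> length [u,w,v] \<le> length q"
      using path_len_ge3 that by fastforce
    ultimately show ?thesis unfolding geodesic_def internal_def using that
      by (intro exI[of _ "[u,w,v]"]) auto
  qed
  show ?thesis
    unfolding dmv2_set_def
  proof (intro conjI ballI impI)
    show "M \<subseteq> V" by (fact M)
  next
    fix u v assume uv: "u \<in> M" "v \<in> M" "u \<noteq> v"
    from gb show "\<exists>p. geodesic V E p u v \<and> length p - 1 \<le> 2 \<and> internal p \<inter> M = {}"
      unfolding good_block_def
    proof (elim disjE exE conjE)
      fix a assume "M = {a}" then show ?thesis using uv by auto
    next
      fix a b assume Mab: "M = {a,b}" "a \<noteq> b" and "E a b"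
      then have "E u v" using uv sym by auto
      then show ?thesis by (rule edge)
    next
      fix a b w assume Mab: "M = {a,b}" "a \<noteq> b" and ab: "E a w" "E w b"
      have wM: "w \<notin> M" using Mab ab irr by auto
      show ?thesis
      proof (cases "E u v")
        case True then show ?thesis by (rule edge)
      next
        case False
        have "(u = a \<and> v = b) \<or> (u = b \<and> v = a)" using uv Mab by auto
        then show ?thesis
        proof
          assume "u = a \<and> v = b" then show ?thesis using two[of u w v] ab False uv wM by auto
        next
          assume "u = b \<and> v = a" then show ?thesis using two[of u w v] ab False uv wM sym by auto
        qed
      qed
    qed
  qed
qed

lemma main_ind:
  assumes g: "graph V E"
  shows "finite W \<Longrightarrow> r \<in> W \<Longrightarrow>
    (\<forall>x\<in>W-{r}. par x \<in> W \<and> E x (par x) \<and> d (par x) < (d x::nat)) \<Longrightarrow>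
    \<exists>P. partition_on W P \<and> (\<forall>M\<in>P. good_block E M) \<and> 2 * card P \<le> card W + 1"
proof (induction "card W" arbitrary: W rule: less_induct)
  case less
  have sym: "\<And>x y. E x y \<Longrightarrow> E y x" and irr: "\<And>x. \<not> E x x"
    using g unfolding graph_def by blast+
  have fin: "finite W" and rW: "r \<in> W" and H: "\<forall>x\<in>W-{r}. par x \<in> W \<and> E x (par x) \<and> d (par x) < d x"
    using less.prems by auto
  show ?case
  proof (cases "W = {r}")
    case True
    then show ?thesis
      by (intro exI[of _ "{{r}}"]) (auto simp: partition_on_space good_block_def)
  next
    case False
    define C where "C = W - {r}"
    have Cne: "C \<noteq> {}" using False rW C_def by auto
    have Cfin: "finite C" using fin C_def by auto
    define m where "m = Max (d ` par ` C)"
    have "m \<in> d ` par ` C" unfolding m_def using Cne Cfin by (intro Max_in) auto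
    then obtain p where pC: "p \<in> par ` C" and dp: "d p = m" by auto
    have pmax: "\<And>q. q \<in> par ` C \<Longrightarrow> d q \<le> d p"
      unfolding dp m_def using Cfin by (intro Max_ge) auto
    have pW: "p \<in> W" using pC H C_def by auto
    obtain v where vC: "v \<in> C" and pv: "par v = p" using pC by auto
    have leaf: "\<And>x u. x \<in> C \<Longrightarrow> u \<in> C \<Longrightarrow> par u = p \<Longrightarrow> par x \<noteq> u"
    proof
      fix x u assume "x \<in> C" "u \<in> C" "par u = p" "par x = u"
      then have "u \<in> par ` C" by auto
      then have "d u \<le> d p" by (rule pmax)
      moreover have "d p < d u" using H \<open>u \<in> C\<close> \<open>par u = p\<close> C_def by auto
      ultimately show False by simp
    qed
    have Evp: "E v p" using H vC pv C_def by auto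
    have vW: "v \<in> W" "v \<noteq> r" using vC C_def by auto
    show ?thesis
    proof (cases "\<exists>v'\<in>C. par v' = p \<and> v' \<noteq> v")
      case True
      then obtain v' where v'C: "v' \<in> C" and pv': "par v' = p" and vv': "v' \<noteq> v" by auto
      have Ev'p: "E v' p" using H v'C pv' C_def by auto
      have v'W: "v' \<in> W" "v' \<noteq> r" using v'C C_def by auto
      define W' where "W' = W - {v,v'}"
      have cardW': "card W' + 2 = card W" unfolding W'_def using fin vW v'W vv' card_mono[OF fin, of "{v,v'}"]
        by (simp add: card_Diff_subset)
      have "\<exists>P. partition_on W' P \<and> (\<forall>M\<in>P. good_block E M) \<and> 2 * card P \<le> card W' + 1"
      proof (rule less.hyps)
        show "card W' < card W" using cardW' by simp
        show "finite W'" using fin W'_def by auto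
        show "r \<in> W'" using rW vW v'W W'_def by auto
        show "\<forall>x\<in>W'-{r}. par x \<in> W' \<and> E x (par x) \<and> d (par x) < d x"
          using H leaf[OF _ vC pv] leaf[OF _ v'C pv'] unfolding W'_def C_def by auto
      qed
      then obtain P where P: "partition_on W' P" "\<forall>M\<in>P. good_block E M" "2 * card P \<le> card W' + 1"
        by blast
      have disj: "disjnt {v,v'} (\<Union>P)" using partition_onD1[OF P(1)] W'_def by auto
      have "partition_on W (insert {v,v'} P)"
        using partition_on_insert[OF disj] P(1) vW v'W W'_def by auto
      moreover have "good_block E {v,v'}" unfolding good_block_def
        using vv' Evp Ev'p sym by blast
      moreover have "card (insert {v,v'} P) \<le> card P + 1"
        by (cases "finite P") (auto simp: card_insert_if)
      ultimately show ?thesis using P cardW' by (intro exI[of _ "insert {v,v'} P"]) auto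
    next
      case False
      then have only: "\<And>x. x \<in> C \<Longrightarrow> par x = p \<Longrightarrow> x = v" by auto
      show ?thesis
      proof (cases "p = r")
        case False
        have pv2: "p \<noteq> v" using Evp irr by metis
        define W' where "W' = W - {v,p}"
        have cardW': "card W' + 2 = card W" unfolding W'_def using fin vW pW pv2 card_mono[OF fin, of "{v,p}"]
          by (simp add: card_Diff_subset)
        have "\<exists>P. partition_on W' P \<and> (\<forall>M\<in>P. good_block E M) \<and> 2 * card P \<le> card W' + 1"
        proof (rule less.hyps)
          show "card W' < card W" using cardW' by simp
          show "finite W'" using fin W'_def by auto
          show "r \<in> W'" using rW vW False W'_def by auto
          show "\<forall>x\<in>W'-{r}. par x \<in> W' \<and> E x (par x) \<and> d (par x) < d x"
            using H leaf[OF _ vC pv] only unfolding W'_def C_def by fastforce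
        qed
        then obtain P where P: "partition_on W' P" "\<forall>M\<in>P. good_block E M" "2 * card P \<le> card W' + 1"
          by blast
        have disj: "disjnt {v,p} (\<Union>P)" using partition_onD1[OF P(1)] W'_def by auto
        have "partition_on W (insert {v,p} P)"
          using partition_on_insert[OF disj] P(1) vW pW W'_def by auto
        moreover have "good_block E {v,p}" unfolding good_block_def
          using pv2 Evp by blast
        moreover have "card (insert {v,p} P) \<le> card P + 1"
          by (cases "finite P") (auto simp: card_insert_if)
        ultimately show ?thesis using P cardW' by (intro exI[of _ "insert {v,p} P"]) auto
      next
        case True
        have WW: "W = {r,v}"
        proof (rule ccontr)
          assume "W \<noteq> {r,v}"
          then have Sne: "W - {r,v} \<noteq> {}" using rW vW by auto
          define S where "S = W - {r,v}"
          have "Min (d ` S) \<in> d ` S" using Sne fin S_def by (intro Min_in) auto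
          then obtain y where yS: "y \<in> S" and ymin: "d y = Min (d ` S)" by auto
          have yC: "y \<in> C" using yS S_def C_def by auto
          have "par y \<noteq> r" using only yC True yS S_def by auto
          moreover have "par y \<noteq> v" using leaf[OF yC vC pv] .
          moreover have "par y \<in> W" "d (par y) < d y" using H yC C_def by auto
          ultimately have "par y \<in> S" unfolding S_def by auto
          then have "d y \<le> d (par y)" unfolding ymin using fin S_def by (intro Min_le) auto
          with \<open>d (par y) < d y\<close> show False by simp
        qed
        have "partition_on W {{r,v}}" using WW partition_on_space[of W] by auto
        moreover have "good_block E {r,v}" unfolding good_block_def
          using vW Evp True sym by blast
        moreover have "card W = 2" using WW vW by auto
        ultimately show ?thesis by (intro exI[of _ "{{r,v}}"]) auto
      qed
    qed
  qed
qed

lemma conn_tree: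
  assumes g: "graph V E" and c: "connected_graph V E" and r: "r \<in> V"
  shows "\<exists>par d. \<forall>x\<in>V-{r}. par x \<in> V \<and> E x (par x) \<and> d (par x) < (d x::nat)"
proof -
  define d where "d x = (LEAST k. \<exists>q. is_path V E q x r \<and> length q = k)" for x
  have "\<exists>y. y \<in> V \<and> E x y \<and> d y < d x" if x: "x \<in> V - {r}" for x
  proof -
    have "\<exists>k q. is_path V E q x r \<and> length q = k" using c x r unfolding connected_graph_def by blast
    then have "\<exists>q. is_path V E q x r \<and> length q = d x" unfolding d_def by (rule LeastI_ex)
    then obtain q where q: "is_path V E q x r" "length q = d x" by blast
    have "length q \<ge> 2" using path_len_ge2[OF q(1)] x by auto
    then obtain a b rest where qq: "q = a # b # rest" by (cases q; cases "tl q") (auto simp: Suc_le_eq)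
    have ax: "a = x" using q(1) qq unfolding is_path_def by auto
    have Exb: "E x b" using q(1) qq ax unfolding is_path_def by (auto dest: spec[of _ 0])
    have bV: "b \<in> V" using q(1) qq unfolding is_path_def by auto
    have "is_path V E (b # rest) b r" using q(1) qq unfolding is_path_def
      by (auto dest: spec[of _ "Suc i" for i])
    then have "d b \<le> length (b # rest)" unfolding d_def by (intro Least_le) blast
    then have "d b < d x" using q(2) qq by simp
    then show ?thesis using Exb bV by blast
  qed
  then have "\<exists>par. \<forall>x\<in>V-{r}. par x \<in> V \<and> E x (par x) \<and> d (par x) < d x" by (intro bchoice ballI)
  then show ?thesis by blast
qed

lemma part1:
  assumes g: "graph V E" and c: "connected_graph V E"
  shows "\<exists>P. partition_on V P \<and> (\<forall>M\<in>P. dmv2_set V E M) \<and> 2 * card P \<le> card V + 1"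
proof (cases "V = {}")
  case True
  then show ?thesis by (intro exI[of _ "{}"]) (auto simp: partition_on_empty)
next
  case False
  then obtain r where r: "r \<in> V" by auto
  obtain par d where H: "\<forall>x\<in>V-{r}. par x \<in> V \<and> E x (par x) \<and> d (par x) < (d x::nat)"
    using conn_tree[OF g c r] by blast
  have fin: "finite V" using g unfolding graph_def by auto
  obtain P where P: "partition_on V P" "\<forall>M\<in>P. good_block E M" "2 * card P \<le> card V + 1"
    using main_ind[OF g fin r H] by blast
  have "\<forall>M\<in>P. dmv2_set V E M"
  proof
    fix M assume "M \<in> P"
    then show "dmv2_set V E M" using good_dmv2[OF g _ ] P partition_onD1[OF P(1)] by blast
  qed
  then show ?thesis using P by blast
qed

lemma ceil_half: "real_of_int \<lceil>real n / 2\<rceil> = real ((n + 1) div 2)"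
proof -
  have "\<lceil>real n / 2\<rceil> = int ((n + 1) div 2)"
  proof (cases "even n")
    case True
    then obtain k where "n = 2 * k" by auto
    then show ?thesis by simp
  next
    case False
    then obtain k where n: "n = 2 * k + 1" using oddE by blast
    have "real n / 2 = real k + 1/2" using n by simp
    then have "\<lceil>real n / 2\<rceil> = int k + 1" by (simp add: ceiling_eq_iff)
    then show ?thesis using n by simp
  qed
  then show ?thesis by simp
qed

lemma upper:
  assumes g: "graph V E" and c: "connected_graph V E"
  shows "2 * chi_mu2 V E \<le> card V + 1"
proof -
  obtain P where P: "partition_on V P" "\<forall>M\<in>P. dmv2_set V E M" "2 * card P \<le> card V + 1"
    using part1[OF g c] by blast
  have "chi_mu2 V E \<le> card P" unfolding chi_mu2_def using P by (intro Least_le) blast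
  then show ?thesis using P(3) by linarith
qed

definition PE :: "nat \<Rightarrow> nat \<Rightarrow> nat \<Rightarrow> bool" where
  "PE n i j \<longleftrightarrow> i < n \<and> j < n \<and> (j = Suc i \<or> i = Suc j)"

lemma path_rev:
  assumes p: "is_path V E p u v" and sym: "\<And>x y. E x y \<Longrightarrow> E y x"
  shows "is_path V E (rev p) v u"
proof -
  have e: "\<And>i. Suc i < length p \<Longrightarrow> E (p ! i) (p ! Suc i)" using p unfolding is_path_def by auto
  have "E (rev p ! i) (rev p ! Suc i)" if i: "Suc i < length p" for i
  proof -
    define j where "j = length p - Suc (Suc i)"
    have j1: "Suc j = length p - Suc i" using i j_def by simp
    have "E (p ! j) (p ! Suc j)" using e[of j] i j1 by simp
    then have "E (p ! Suc j) (p ! j)" by (rule sym)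
    then show ?thesis using i j1 j_def by (simp add: rev_nth)
  qed
  then show ?thesis using p unfolding is_path_def by (auto simp: hd_rev last_rev)
qed

lemma PE_graph: "graph {0..<n} (PE n)"
  unfolding graph_def PE_def by auto

lemma PE_path_up:
  assumes "u \<le> v" "v < n"
  shows "is_path {0..<n} (PE n) [u..<Suc v] u v"
  using assms unfolding is_path_def PE_def by (auto simp del: upt_Suc simp: nth_upt hd_upt last_upt)

lemma PE_conn: "connected_graph {0..<n} (PE n)"
  unfolding connected_graph_def
proof (intro ballI)
  fix u v assume uv: "u \<in> {0..<n}" "v \<in> {0..<n}"
  show "\<exists>p. is_path {0..<n} (PE n) p u v"
  proof (cases "u \<le> v")
    case True then show ?thesis using PE_path_up uv by auto
  next
    case False
    then have "is_path {0..<n} (PE n) [v..<Suc u] v u" using PE_path_up uv by auto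
    then have "is_path {0..<n} (PE n) (rev [v..<Suc u]) u v"
      by (rule path_rev) (auto simp: PE_def)
    then show ?thesis by blast
  qed
qed

lemma PE_short:
  assumes p: "is_path {0..<n} (PE n) p a c" and ac: "a < c" and len: "length p \<le> 3"
  shows "c \<le> a + 2 \<and> (c = a + 2 \<longrightarrow> a + 1 \<in> internal p)"
proof -
  have "p \<noteq> []" using p unfolding is_path_def by auto
  then have "(\<exists>x. p = [x]) \<or> (\<exists>x y. p = [x,y]) \<or> (\<exists>x y z. p = [x,y,z])" using len
    by (cases p; cases "tl p"; cases "tl (tl p)") (auto simp: Suc_le_eq)
  then show ?thesis
  proof (elim disjE exE)
    fix x assume "p = [x]" then show ?thesis using p ac unfolding is_path_def by auto
  next
    fix x y assume "p = [x,y]" then show ?thesis using p ac unfolding is_path_def PE_def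
      by (auto dest: spec[of _ 0])
  next
    fix x y z assume pp: "p = [x,y,z]"
    then have "PE n x y" "PE n y z" "x = a" "z = c" using p unfolding is_path_def
      by (auto dest: spec[of _ 0] spec[of _ 1])
    then show ?thesis using pp ac unfolding PE_def internal_def by auto
  qed
qed

lemma PE_dmv2_card:
  assumes M: "dmv2_set {0..<n} (PE n) M"
  shows "card M \<le> 2"
proof (cases "M = {}")
  case True then show ?thesis by simp
next
  case False
  have Msub: "M \<subseteq> {0..<n}" using M unfolding dmv2_set_def by auto
  then have fin: "finite M" using finite_subset by blast
  define a where "a = Min M"
  have aM: "a \<in> M" unfolding a_def using fin False by (rule Min_in)
  have key: "c \<le> a + 2 \<and> (c = a + 2 \<longrightarrow> a + 1 \<notin> M)" if cM: "c \<in> M" "c \<noteq> a" for c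
  proof -
    have "a \<le> c" unfolding a_def using fin cM by auto
    then have ac: "a < c" using cM by auto
    have "\<forall>u\<in>M. \<forall>v\<in>M. u \<noteq> v \<longrightarrow>
        (\<exists>p. geodesic {0..<n} (PE n) p u v \<and> length p - 1 \<le> 2 \<and> internal p \<inter> M = {})"
      using M unfolding dmv2_set_def by (elim conjE)
    then obtain p where p: "geodesic {0..<n} (PE n) p a c" "length p - 1 \<le> 2" "internal p \<inter> M = {}"
      using aM cM ac by fastforce
    have "is_path {0..<n} (PE n) p a c" using p(1) unfolding geodesic_def by auto
    moreover have "length p \<le> 3" using p(2) by auto
    ultimately have "c \<le> a + 2 \<and> (c = a + 2 \<longrightarrow> a + 1 \<in> internal p)" using ac by (intro PE_short)
    then show ?thesis using p(3) by blast
  qed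
  have amin: "\<And>c. c \<in> M \<Longrightarrow> a \<le> c" unfolding a_def using fin by auto
  show ?thesis
  proof (cases "a + 2 \<in> M")
    case True
    then have n1: "a + 1 \<notin> M" using key[of "a+2"] by auto
    have "M \<subseteq> {a, a+2}"
    proof
      fix c assume c: "c \<in> M"
      show "c \<in> {a, a+2}"
      proof (cases "c = a")
        case False
        then have "c \<le> a + 2" "a \<le> c" "c \<noteq> a + 1" using key[OF c] amin[OF c] n1 c by auto
        then show ?thesis using False by auto
      qed simp
    qed
    then show ?thesis using card_mono[of "{a,a+2}" M] by (simp add: card_insert_if)
  next
    case False
    have "M \<subseteq> {a, a+1}"
    proof
      fix c assume c: "c \<in> M"
      show "c \<in> {a, a+1}"
      proof (cases "c = a")
        case cf: False
        then have "c \<le> a + 2" "a \<le> c" "c \<noteq> a + 2" using key[OF c] amin[OF c] False c by auto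
        then show ?thesis using cf by auto
      qed simp
    qed
    then show ?thesis using card_mono[of "{a,a+1}" M] by (simp add: card_insert_if)
  qed
qed

lemma PE_lower:
  assumes P: "partition_on {0..<n} P" "\<forall>M\<in>P. dmv2_set {0..<n} (PE n) M"
  shows "n \<le> 2 * card P"
proof -
  have U: "\<Union>P = {0..<n}" using partition_onD1[OF P(1)] by simp
  have fin: "\<And>A. A \<in> P \<Longrightarrow> finite A"
  proof -
    fix A assume "A \<in> P"
    then have "A \<subseteq> {0..<n}" using U by blast
    then show "finite A" using finite_subset by blast
  qed
  have "n = card (\<Union>P)" using U by simp
  also have "\<dots> = sum card P" using partition_onD2[OF P(1)] fin by (rule card_Union_disjoint)
  also have "\<dots> \<le> of_nat (card P) * 2"
    by (rule sum_bounded_above) (use PE_dmv2_card P(2) in blast)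
  finally show ?thesis by simp
qed

theorem theorem3p1:
  shows "(\<forall>(V :: 'a set) E. graph V E \<and> connected_graph V E \<longrightarrow>
            real (chi_mu2 V E) \<le> real_of_int \<lceil>real (card V) / 2\<rceil>)
       \<and> (\<forall>n::nat. n \<ge> 1 \<longrightarrow> (\<exists>(V :: nat set) E. graph V E \<and> connected_graph V E \<and> card V = n
            \<and> real (chi_mu2 V E) = real_of_int \<lceil>real n / 2\<rceil>))"
proof (intro conjI allI impI)
  fix V :: "'a set" and E assume "graph V E \<and> connected_graph V E"
  then have "2 * chi_mu2 V E \<le> card V + 1" using upper by blast
  then have "chi_mu2 V E \<le> (card V + 1) div 2" by linarith
  then show "real (chi_mu2 V E) \<le> real_of_int \<lceil>real (card V) / 2\<rceil>"
    unfolding ceil_half by linarith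
next
  fix n :: nat assume "n \<ge> 1"
  have g: "graph {0..<n} (PE n)" by (rule PE_graph)
  have c: "connected_graph {0..<n} (PE n)" by (rule PE_conn)
  have up: "2 * chi_mu2 {0..<n} (PE n) \<le> n + 1" using upper[OF g c] by simp
  obtain P0 where P0: "partition_on {0..<n} P0" "\<forall>M\<in>P0. dmv2_set {0..<n} (PE n) M"
    using part1[OF g c] by blast
  have "\<exists>P. partition_on {0..<n} P \<and> (\<forall>M\<in>P. dmv2_set {0..<n} (PE n) M) \<and> card P = chi_mu2 {0..<n} (PE n)"
    unfolding chi_mu2_def by (rule LeastI_ex) (use P0 in blast)
  then obtain P where P: "partition_on {0..<n} P" "\<forall>M\<in>P. dmv2_set {0..<n} (PE n) M"
    "card P = chi_mu2 {0..<n} (PE n)" by blast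
  have lo: "n \<le> 2 * chi_mu2 {0..<n} (PE n)" using PE_lower[OF P(1,2)] P(3) by simp
  have "chi_mu2 {0..<n} (PE n) = (n + 1) div 2" using up lo by linarith
  then have "real (chi_mu2 {0..<n} (PE n)) = real_of_int \<lceil>real n / 2\<rceil>"
    unfolding ceil_half by simp
  then show "\<exists>(V :: nat set) E. graph V E \<and> connected_graph V E \<and> card V = n
            \<and> real (chi_mu2 V E) = real_of_int \<lceil>real n / 2\<rceil>"
    using g c by (intro exI[of _ "{0..<n}"] exI[of _ "PE n"]) simp
qed

end
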